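(* For any graphs $G$ and $H$, $\chi_{lc}(G\,\square\, H)=\max\{\chi_{lc}(G),\chi_{lc}(H)\}$.
   Context: Graphs are finite, loopless, with symmetric edge sets; write $v\sim w$ for adjacency and $K_c$ for the complete graph on $c$ vertices. The Cartesian product $G\,\square\,H$ has vertex set $V(G)\times V(H)$ with $(v,x)\sim(w,y)$ iff ($v=w$ and $x\sim y$) or ($v\sim w$ and $x=y$). For graphs $G,H$, $\mathcal A_{lc}(G,H)$ is the unital complex algebra generated by $e_{v,x}$ ($v\in V(G)$, $x\in V(H)$) with relations: $\sum_{x}e_{v,x}=1$; $e_{v,x}^2=e_{v,x}$; $e_{v,x}e_{v,y}=0$ for $x\ne y$; $e_{v,x}e_{w,y}=0$ if $v\sim w$ and $x\not\sim y$; $e_{v,x}e_{w,y}=e_{w,y}e_{v,x}$ if $v\sim w$. $\chi_{lc}(G)=\min\{c:\mathcal A_{lc}(G,K_c)\ne0\}$. *)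

theory Defs
  imports Complex_Main
begin

definition is_graph :: "'a set \<Rightarrow> ('a \<Rightarrow> 'a \<Rightarrow> bool) \<Rightarrow> bool" where
  "is_graph V E \<longleftrightarrow> finite V \<and> (\<forall>v w. E v w \<longrightarrow> v \<in> V \<and> w \<in> V)
     \<and> (\<forall>v w. E v w \<longrightarrow> E w v) \<and> (\<forall>v. \<not> E v v)"

definition cart_V :: "'a set \<Rightarrow> 'b set \<Rightarrow> ('a \<times> 'b) set" where
  "cart_V VG VH = VG \<times> VH"

definition cart_E :: "('a \<Rightarrow> 'a \<Rightarrow> bool) \<Rightarrow> ('b \<Rightarrow> 'b \<Rightarrow> bool)
    \<Rightarrow> ('a \<times> 'b) \<Rightarrow> ('a \<times> 'b) \<Rightarrow> bool" where
  "cart_E EG EH p q \<longleftrightarrow>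
     (fst p = fst q \<and> EH (snd p) (snd q)) \<or> (EG (fst p) (fst q) \<and> snd p = snd q)"

definition K_V :: "nat \<Rightarrow> nat set" where "K_V c = {..<c}"
definition K_E :: "nat \<Rightarrow> nat \<Rightarrow> nat \<Rightarrow> bool" where
  "K_E c x y \<longleftrightarrow> x < c \<and> y < c \<and> x \<noteq> y"

text \<open>Free unital complex algebra on a generator alphabet 'g: noncommutative
  polynomials, represented as coefficient functions on words (finitely supported
  by construction below).\<close>
type_synonym 'g ncpoly = "'g list \<Rightarrow> complex"

definition mono :: "'g list \<Rightarrow> 'g ncpoly" where
  "mono u = (\<lambda>t. if t = u then 1 else 0)"

text \<open>The element u * p * w of the free algebra, for words u, w.\<close>
definition sandwich :: "'g list \<Rightarrow> 'g ncpoly \<Rightarrow> 'g list \<Rightarrow> 'g ncpoly" where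
  "sandwich u p w = (\<lambda>t. if (\<exists>m. t = u @ m @ w)
      then p (take (length t - length u - length w) (drop (length u) t)) else 0)"

text \<open>Defining relations of A_lc(G,H), as elements r of the free algebra on the
  generators e_(v,x), v in V(G), x in V(H) (relation: r = 0).\<close>
inductive_set lc_rels :: "'a set \<Rightarrow> ('a \<Rightarrow> 'a \<Rightarrow> bool) \<Rightarrow> 'b set \<Rightarrow> ('b \<Rightarrow> 'b \<Rightarrow> bool)
    \<Rightarrow> ('a \<times> 'b) ncpoly set"
  for VG EG VH EH where
  sum_one: "v \<in> VG \<Longrightarrow> (\<lambda>t. (\<Sum>x\<in>VH. mono [(v,x)] t) - mono [] t) \<in> lc_rels VG EG VH EH"
| idem: "v \<in> VG \<Longrightarrow> x \<in> VH \<Longrightarrow>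
    (\<lambda>t. mono [(v,x),(v,x)] t - mono [(v,x)] t) \<in> lc_rels VG EG VH EH"
| orth: "v \<in> VG \<Longrightarrow> x \<in> VH \<Longrightarrow> y \<in> VH \<Longrightarrow> x \<noteq> y \<Longrightarrow>
    mono [(v,x),(v,y)] \<in> lc_rels VG EG VH EH"
| hom: "v \<in> VG \<Longrightarrow> w \<in> VG \<Longrightarrow> x \<in> VH \<Longrightarrow> y \<in> VH \<Longrightarrow> EG v w \<Longrightarrow> \<not> EH x y \<Longrightarrow>
    mono [(v,x),(w,y)] \<in> lc_rels VG EG VH EH"
| comm: "v \<in> VG \<Longrightarrow> w \<in> VG \<Longrightarrow> x \<in> VH \<Longrightarrow> y \<in> VH \<Longrightarrow> EG v w \<Longrightarrow>
    (\<lambda>t. mono [(v,x),(w,y)] t - mono [(w,y),(v,x)] t) \<in> lc_rels VG EG VH EH"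

text \<open>The two-sided ideal of the free algebra generated by the relations
  (= linear span of all u * r * w with u, w words in the generators).\<close>
inductive_set lc_ideal :: "'a set \<Rightarrow> ('a \<Rightarrow> 'a \<Rightarrow> bool) \<Rightarrow> 'b set \<Rightarrow> ('b \<Rightarrow> 'b \<Rightarrow> bool)
    \<Rightarrow> ('a \<times> 'b) ncpoly set"
  for VG EG VH EH where
  zero: "(\<lambda>t. 0) \<in> lc_ideal VG EG VH EH"
| gen: "r \<in> lc_rels VG EG VH EH \<Longrightarrow> set u \<subseteq> VG \<times> VH \<Longrightarrow> set w \<subseteq> VG \<times> VH \<Longrightarrow>
    sandwich u r w \<in> lc_ideal VG EG VH EH"
| add: "p \<in> lc_ideal VG EG VH EH \<Longrightarrow> q \<in> lc_ideal VG EG VH EH \<Longrightarrow>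
    (\<lambda>t. p t + q t) \<in> lc_ideal VG EG VH EH"
| smult: "p \<in> lc_ideal VG EG VH EH \<Longrightarrow> (\<lambda>t. c * p t) \<in> lc_ideal VG EG VH EH"

text \<open>A_lc(G,H) is nonzero iff 1 is not in the defining ideal.\<close>
definition lc_nonzero :: "'a set \<Rightarrow> ('a \<Rightarrow> 'a \<Rightarrow> bool) \<Rightarrow> 'b set \<Rightarrow> ('b \<Rightarrow> 'b \<Rightarrow> bool) \<Rightarrow> bool" where
  "lc_nonzero VG EG VH EH \<longleftrightarrow> mono [] \<notin> lc_ideal VG EG VH EH"

definition chi_lc :: "'a set \<Rightarrow> ('a \<Rightarrow> 'a \<Rightarrow> bool) \<Rightarrow> nat" where
  "chi_lc V E = (LEAST c. lc_nonzero V E (K_V c) (K_E c))"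

end

theory Submission
  imports Defs "HOL-Library.Function_Algebras"
begin

definition good :: "'a set \<Rightarrow> ('a \<Rightarrow> 'a \<Rightarrow> bool) \<Rightarrow> nat \<Rightarrow> (('a \<times> nat) list \<Rightarrow> complex) \<Rightarrow> bool" where
 "good V E c \<psi> \<longleftrightarrow> \<psi> [] = 1 \<and>
  (\<forall>u w v. set u \<subseteq> V \<times> {..<c} \<longrightarrow> set w \<subseteq> V \<times> {..<c} \<longrightarrow> v \<in> V \<longrightarrow>
     (\<Sum>x<c. \<psi> (u @ (v,x) # w)) = \<psi> (u @ w)) \<and>
  (\<forall>u w v x y. set u \<subseteq> V \<times> {..<c} \<longrightarrow> set w \<subseteq> V \<times> {..<c} \<longrightarrow> v \<in> V \<longrightarrow> x < c \<longrightarrow> y < c \<longrightarrow> x \<noteq> y \<longrightarrow>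
     \<psi> (u @ (v,x) # (v,y) # w) = 0) \<and>
  (\<forall>u w v v' x. set u \<subseteq> V \<times> {..<c} \<longrightarrow> set w \<subseteq> V \<times> {..<c} \<longrightarrow> v \<in> V \<longrightarrow> v' \<in> V \<longrightarrow> E v v' \<longrightarrow> x < c \<longrightarrow>
     \<psi> (u @ (v,x) # (v',x) # w) = 0) \<and>
  (\<forall>u w v v' x y. set u \<subseteq> V \<times> {..<c} \<longrightarrow> set w \<subseteq> V \<times> {..<c} \<longrightarrow> v \<in> V \<longrightarrow> v' \<in> V \<longrightarrow> E v v' \<longrightarrow> x < c \<longrightarrow> y < c \<longrightarrow>
     \<psi> (u @ (v,x) # (v',y) # w) = \<psi> (u @ (v',y) # (v,x) # w))"

lemma goodD:
  assumes "good V E c \<psi>"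
  shows "\<psi> [] = 1"
   and "set u \<subseteq> V \<times> {..<c} \<Longrightarrow> set w \<subseteq> V \<times> {..<c} \<Longrightarrow> v \<in> V \<Longrightarrow>
     (\<Sum>x<c. \<psi> (u @ (v,x) # w)) = \<psi> (u @ w)"
   and "set u \<subseteq> V \<times> {..<c} \<Longrightarrow> set w \<subseteq> V \<times> {..<c} \<Longrightarrow> v \<in> V \<Longrightarrow> x < c \<Longrightarrow> y < c \<Longrightarrow> x \<noteq> y \<Longrightarrow>
     \<psi> (u @ (v,x) # (v,y) # w) = 0"
   and "set u \<subseteq> V \<times> {..<c} \<Longrightarrow> set w \<subseteq> V \<times> {..<c} \<Longrightarrow> v \<in> V \<Longrightarrow> v' \<in> V \<Longrightarrow> E v v' \<Longrightarrow> x < c \<Longrightarrow>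
     \<psi> (u @ (v,x) # (v',x) # w) = 0"
   and "set u \<subseteq> V \<times> {..<c} \<Longrightarrow> set w \<subseteq> V \<times> {..<c} \<Longrightarrow> v \<in> V \<Longrightarrow> v' \<in> V \<Longrightarrow> E v v' \<Longrightarrow> x < c \<Longrightarrow> y < c \<Longrightarrow>
     \<psi> (u @ (v,x) # (v',y) # w) = \<psi> (u @ (v',y) # (v,x) # w)"
  using assms unfolding good_def by blast+


lemma good_idem:
  assumes "good V E c \<psi>" "set u \<subseteq> V \<times> {..<c}" "set w \<subseteq> V \<times> {..<c}" "v \<in> V" "x < c"
  shows "\<psi> (u @ (v,x) # (v,x) # w) = \<psi> (u @ (v,x) # w)"
proof -
  have "(\<Sum>y<c. \<psi> ((u @ [(v,x)]) @ (v,y) # w)) = \<psi> ((u @ [(v,x)]) @ w)"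
    by (rule goodD(2)[OF assms(1)]) (use assms in auto)
  moreover have "(\<Sum>y<c. \<psi> ((u @ [(v,x)]) @ (v,y) # w)) = (\<Sum>y<c. if y = x then \<psi> ((u @ [(v,x)]) @ (v,x) # w) else 0)"
    by (rule sum.cong[OF refl]) (use assms goodD(3)[OF assms(1)] in auto)
  ultimately show ?thesis using assms(5) by simp
qed

definition Lf :: "('g list \<Rightarrow> complex) \<Rightarrow> ('g list \<Rightarrow> complex) \<Rightarrow> complex" where
  "Lf \<psi> p = (\<Sum>t\<in>{t. p t \<noteq> 0}. p t * \<psi> t)"

lemma Lf_superset: "finite S \<Longrightarrow> {t. p t \<noteq> 0} \<subseteq> S \<Longrightarrow> Lf \<psi> p = (\<Sum>t\<in>S. p t * \<psi> t)"
  unfolding Lf_def by (rule sum.mono_neutral_left) auto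

lemma sandwich_app[simp]: "sandwich u p w (u @ m @ w) = p m"
  by (simp add: sandwich_def)

lemma sandwich_not: "\<not> (\<exists>m. t = u @ m @ w) \<Longrightarrow> sandwich u p w t = 0"
  by (simp add: sandwich_def)

lemma Lf_sandwich:
  assumes "finite S" "{m. r m \<noteq> 0} \<subseteq> S"
  shows "finite {t. sandwich u r w t \<noteq> 0} \<and> Lf \<psi> (sandwich u r w) = (\<Sum>m\<in>S. r m * \<psi> (u @ m @ w))"
proof -
  have sub: "{t. sandwich u r w t \<noteq> 0} \<subseteq> (\<lambda>m. u @ m @ w) ` S"
  proof
    fix t assume "t \<in> {t. sandwich u r w t \<noteq> 0}"
    then have ne: "sandwich u r w t \<noteq> 0" by simp
    then obtain m where t: "t = u @ m @ w" using sandwich_not by blast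
    then show "t \<in> (\<lambda>m. u @ m @ w) ` S" using ne assms(2) by auto
  qed
  have inj: "inj_on (\<lambda>m. u @ m @ w) S" by (auto simp: inj_on_def)
  have "Lf \<psi> (sandwich u r w) = (\<Sum>t\<in>(\<lambda>m. u @ m @ w) ` S. sandwich u r w t * \<psi> t)"
    by (rule Lf_superset[OF _ sub]) (use assms in simp)
  also have "\<dots> = (\<Sum>m\<in>S. r m * \<psi> (u @ m @ w))"
    by (subst sum.reindex[OF inj]) simp
  finally show ?thesis using sub assms(1) finite_subset by blast
qed

lemma sum_mono1: "(\<Sum>m\<in>S. Defs.mono a m * f m) = f a" if "finite S" "a \<in> S"
proof -
  have "(\<Sum>m\<in>S. Defs.mono a m * f m) = (\<Sum>m\<in>S. if m = a then f m else 0)"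
    by (rule sum.cong) (auto simp: Defs.mono_def)
  then show ?thesis using that by (simp add: sum.delta)
qed

lemma sum_mono_diff: "(\<Sum>m\<in>S. (Defs.mono a m - Defs.mono b m) * f m) = f a - f b" if "finite S" "a \<in> S" "b \<in> S"
  using that by (simp add: left_diff_distrib sum_subtractf sum_mono1)

lemma rel_ok:
  assumes g: "good V E c \<psi>" and r: "r \<in> lc_rels V E (K_V c) (K_E c)"
    and u: "set u \<subseteq> V \<times> K_V c" and w: "set w \<subseteq> V \<times> K_V c"
  shows "\<exists>S. finite S \<and> {m. r m \<noteq> 0} \<subseteq> S \<and> (\<Sum>m\<in>S. r m * \<psi> (u @ m @ w)) = 0"
  using r
proof cases
  case (sum_one v)
  let ?S = "insert [] ((\<lambda>x. [(v,x)]) ` {..<c})"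
  have fin: "finite ?S" by simp
  have supp: "{m. r m \<noteq> 0} \<subseteq> ?S"
  proof
    fix m assume "m \<in> {m. r m \<noteq> 0}"
    then have "r m \<noteq> 0" by simp
    show "m \<in> ?S"
    proof (rule ccontr)
      assume "m \<notin> ?S"
      then have "\<forall>x<c. m \<noteq> [(v,x)]" "m \<noteq> []" by auto
      then have "r m = 0" unfolding sum_one by (simp add: Defs.mono_def K_V_def)
      with \<open>r m \<noteq> 0\<close> show False by simp
    qed
  qed
  have "(\<Sum>m\<in>?S. r m * \<psi> (u @ m @ w)) =
     (\<Sum>m\<in>?S. \<Sum>x<c. Defs.mono [(v,x)] m * \<psi> (u @ m @ w)) - (\<Sum>m\<in>?S. Defs.mono [] m * \<psi> (u @ m @ w))"
    unfolding sum_one by (simp add: K_V_def left_diff_distrib sum_subtractf sum_distrib_right)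
  also have "\<dots> = (\<Sum>x<c. \<psi> (u @ (v,x) # w)) - \<psi> (u @ w)"
    by (subst sum.swap) (simp add: sum_mono1)
  also have "\<dots> = 0" using goodD(2)[OF g, of u w v] u w sum_one by (simp add: K_V_def)
  finally have "(\<Sum>m\<in>?S. r m * \<psi> (u @ m @ w)) = 0" .
  with fin supp show ?thesis by (intro exI[of _ ?S] conjI)
next
  case (idem v x)
  let ?S = "{[(v,x),(v,x)], [(v,x)]}"
  have "(\<Sum>m\<in>?S. r m * \<psi> (u @ m @ w)) = \<psi> (u @ (v,x) # (v,x) # w) - \<psi> (u @ (v,x) # w)"
    unfolding idem by (subst sum_mono_diff) auto
  also have "\<dots> = 0" using good_idem[OF g, of u w v x] u w idem by (simp add: K_V_def)
  finally have "(\<Sum>m\<in>?S. r m * \<psi> (u @ m @ w)) = 0" .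
  moreover have "{m. r m \<noteq> 0} \<subseteq> ?S"
  proof
    fix m assume "m \<in> {m. r m \<noteq> 0}"
    then have "r m \<noteq> 0" by simp
    then show "m \<in> ?S" by (rule contrapos_np) (simp add: idem Defs.mono_def)
  qed
  moreover have "finite ?S" by simp
  ultimately show ?thesis by (intro exI[of _ ?S] conjI)
next
  case (orth v x y)
  let ?S = "{[(v,x),(v,y)]}"
  have "(\<Sum>m\<in>?S. r m * \<psi> (u @ m @ w)) = \<psi> (u @ (v,x) # (v,y) # w)"
    unfolding orth by (subst sum_mono1[where f="\<lambda>m. \<psi> (u @ m @ w)"]) auto
  also have "\<dots> = 0" using goodD(3)[OF g, of u w v x y] u w orth by (simp add: K_V_def)
  finally have "(\<Sum>m\<in>?S. r m * \<psi> (u @ m @ w)) = 0" .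
  moreover have "{m. r m \<noteq> 0} \<subseteq> ?S"
  proof
    fix m assume "m \<in> {m. r m \<noteq> 0}"
    then have "r m \<noteq> 0" by simp
    then show "m \<in> ?S" by (rule contrapos_np) (simp add: orth Defs.mono_def)
  qed
  moreover have "finite ?S" by simp
  ultimately show ?thesis by (intro exI[of _ ?S] conjI)
next
  case (hom v v' x y)
  then have xy: "x = y" by (auto simp: K_E_def K_V_def)
  let ?S = "{[(v,x),(v',y)]}"
  have "(\<Sum>m\<in>?S. r m * \<psi> (u @ m @ w)) = \<psi> (u @ (v,x) # (v',y) # w)"
    unfolding hom by (subst sum_mono1[where f="\<lambda>m. \<psi> (u @ m @ w)"]) auto
  also have "\<dots> = 0" using goodD(4)[OF g, of u w v v' x] u w hom xy by (simp add: K_V_def)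
  finally have "(\<Sum>m\<in>?S. r m * \<psi> (u @ m @ w)) = 0" .
  moreover have "{m. r m \<noteq> 0} \<subseteq> ?S"
  proof
    fix m assume "m \<in> {m. r m \<noteq> 0}"
    then have "r m \<noteq> 0" by simp
    then show "m \<in> ?S" by (rule contrapos_np) (simp add: hom Defs.mono_def)
  qed
  moreover have "finite ?S" by simp
  ultimately show ?thesis by (intro exI[of _ ?S] conjI)
next
  case (comm v v' x y)
  let ?S = "{[(v,x),(v',y)], [(v',y),(v,x)]}"
  have "(\<Sum>m\<in>?S. r m * \<psi> (u @ m @ w)) = \<psi> (u @ (v,x) # (v',y) # w) - \<psi> (u @ (v',y) # (v,x) # w)"
    unfolding comm by (subst sum_mono_diff) auto
  also have "\<dots> = 0" using goodD(5)[OF g, of u w v v' x y] u w comm by (simp add: K_V_def)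
  finally have "(\<Sum>m\<in>?S. r m * \<psi> (u @ m @ w)) = 0" .
  moreover have "{m. r m \<noteq> 0} \<subseteq> ?S"
  proof
    fix m assume "m \<in> {m. r m \<noteq> 0}"
    then have "r m \<noteq> 0" by simp
    then show "m \<in> ?S" by (rule contrapos_np) (simp add: comm Defs.mono_def)
  qed
  moreover have "finite ?S" by simp
  ultimately show ?thesis by (intro exI[of _ ?S] conjI)
qed

lemma ideal_kill:
  assumes g: "good V E c \<psi>" and p: "p \<in> lc_ideal V E (K_V c) (K_E c)"
  shows "finite {t. p t \<noteq> 0} \<and> Lf \<psi> p = 0"
  using p
proof induction
  case zero
  then show ?case by (simp add: Lf_def)
next
  case (gen r u w)
  obtain S where S: "finite S" "{m. r m \<noteq> 0} \<subseteq> S" "(\<Sum>m\<in>S. r m * \<psi> (u @ m @ w)) = 0"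
    using rel_ok[OF g gen(1-3)] by blast
  show ?case using Lf_sandwich[OF S(1,2), of u w \<psi>] S(3) by simp
next
  case (add p q)
  let ?S = "{t. p t \<noteq> 0} \<union> {t. q t \<noteq> 0}"
  have fin: "finite ?S" using add by simp
  have sub: "{t. p t + q t \<noteq> 0} \<subseteq> ?S" by auto
  have h1: "Lf \<psi> (\<lambda>t. p t + q t) = (\<Sum>t\<in>?S. (p t + q t) * \<psi> t)"
    using Lf_superset[of ?S "\<lambda>t. p t + q t" \<psi>] fin sub by blast
  have h2: "Lf \<psi> p = (\<Sum>t\<in>?S. p t * \<psi> t)"
    using Lf_superset[of ?S p \<psi>] fin by blast
  have h3: "Lf \<psi> q = (\<Sum>t\<in>?S. q t * \<psi> t)"
    using Lf_superset[of ?S q \<psi>] fin by blast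
  have "(\<Sum>t\<in>?S. (p t + q t) * \<psi> t) = (\<Sum>t\<in>?S. p t * \<psi> t) + (\<Sum>t\<in>?S. q t * \<psi> t)"
    by (simp add: distrib_right sum.distrib)
  then have "Lf \<psi> (\<lambda>t. p t + q t) = 0" using h1 h2 h3 add.IH by simp
  moreover have "finite {t. p t + q t \<noteq> 0}" by (rule finite_subset[OF sub fin])
  ultimately show ?case by simp
next
  case (smult p a)
  have sub: "{t. a * p t \<noteq> 0} \<subseteq> {t. p t \<noteq> 0}" by auto
  have fin: "finite {t. p t \<noteq> 0}" using smult by simp
  have h1: "Lf \<psi> (\<lambda>t. a * p t) = (\<Sum>t\<in>{t. p t \<noteq> 0}. a * p t * \<psi> t)"
    by (rule Lf_superset[OF fin sub])
  have h2: "(\<Sum>t\<in>{t. p t \<noteq> 0}. a * p t * \<psi> t) = a * Lf \<psi> p"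
    unfolding Lf_def by (simp add: sum_distrib_left mult.assoc)
  have "Lf \<psi> (\<lambda>t. a * p t) = 0" using h1 h2 smult.IH by simp
  moreover have "finite {t. a * p t \<noteq> 0}" by (rule finite_subset[OF sub fin])
  ultimately show ?case by simp
qed

lemma good_nonzero:
  assumes g: "good V E c \<psi>"
  shows "lc_nonzero V E (K_V c) (K_E c)"
  unfolding lc_nonzero_def
proof
  assume m: "Defs.mono [] \<in> lc_ideal V E (K_V c) (K_E c)"
  have a: "Lf \<psi> (Defs.mono []) = 0" using ideal_kill[OF g m] by (rule conjunct2)
  have "Lf \<psi> (Defs.mono []) = (\<Sum>t\<in>{[]}. Defs.mono [] t * \<psi> t)"
    by (rule Lf_superset[of "{[]}" "Defs.mono []" \<psi>]) (auto simp: Defs.mono_def split: if_splits)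
  also have "\<dots> = 1" by (simp add: Defs.mono_def goodD(1)[OF g])
  finally show False using a by simp
qed


definition fscale :: "complex \<Rightarrow> ('g list \<Rightarrow> complex) \<Rightarrow> ('g list \<Rightarrow> complex)" where
  "fscale a p = (\<lambda>t. a * p t)"

lemma vsp: "vector_space_pair (fscale :: complex \<Rightarrow> ('g list \<Rightarrow> complex) \<Rightarrow> _) ((*) :: complex \<Rightarrow> complex \<Rightarrow> complex)"
  unfolding vector_space_pair_def vector_space_def
  by (auto simp: fscale_def fun_eq_iff algebra_simps)

lemma sum_fun_apply: "(sum f X) t = (\<Sum>x\<in>X. f x t)"
  by (induction X rule: infinite_finite_induct) auto

lemma sandwich_mono: "sandwich u (Defs.mono m) w = Defs.mono (u @ m @ w)"
proof
  fix t show "sandwich u (Defs.mono m) w t = Defs.mono (u @ m @ w) t"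
  proof (cases "\<exists>m'. t = u @ m' @ w")
    case True then obtain m' where "t = u @ m' @ w" by blast
    then show ?thesis by (auto simp: Defs.mono_def)
  next
    case False then show ?thesis by (auto simp: sandwich_not Defs.mono_def)
  qed
qed

lemma sandwich_diff: "sandwich u (\<lambda>t. p t - q t) w = sandwich u p w - sandwich u q w"
  by (auto simp: sandwich_def fun_eq_iff)

lemma sandwich_sum: "sandwich u (\<lambda>t. \<Sum>x\<in>X. f x t) w = (\<Sum>x\<in>X. sandwich u (f x) w)"
  by (auto simp: sandwich_def fun_eq_iff sum_fun_apply)

lemma nonzero_good:
  fixes V :: "'a set"
  assumes nz: "lc_nonzero V E (K_V c) (K_E c)"
  shows "\<exists>\<psi>. good V E c \<psi>"
proof -
  let ?I = "lc_ideal V E (K_V c) (K_E c)"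
  interpret vsp: vector_space_pair "fscale :: complex \<Rightarrow> (('a \<times> nat) list \<Rightarrow> complex) \<Rightarrow> _" "(*) :: complex \<Rightarrow> complex \<Rightarrow> complex"
    by (rule vsp)
  have sub: "vsp.vs1.subspace ?I"
    unfolding vsp.vs1.subspace_def
  proof (intro conjI ballI allI)
    show "0 \<in> ?I" using lc_ideal.zero by (simp add: zero_fun_def)
  next
    fix x y assume "x \<in> ?I" "y \<in> ?I"
    then show "x + y \<in> ?I" using lc_ideal.add[of x V E "K_V c" "K_E c" y] by (simp add: plus_fun_def)
  next
    fix a x assume "x \<in> ?I"
    then show "fscale a x \<in> ?I" using lc_ideal.smult by (simp add: fscale_def)
  qed
  obtain B where B: "B \<subseteq> ?I" "vsp.vs1.independent B" "?I \<subseteq> vsp.vs1.span B" "card B = vsp.vs1.dim ?I"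
    by (rule vsp.vs1.basis_exists)
  have spanB: "vsp.vs1.span B \<subseteq> ?I" by (rule vsp.vs1.span_minimal[OF B(1) sub])
  have m0: "Defs.mono [] \<notin> ?I" using nz by (simp add: lc_nonzero_def)
  have ind: "vsp.vs1.independent (insert (Defs.mono []) B)"
    by (rule vsp.vs1.independent_insertI) (use m0 spanB B in auto)
  obtain g where g: "Vector_Spaces.linear fscale (*) g" "\<forall>x\<in>insert (Defs.mono []) B. g x = (if x = Defs.mono [] then 1 else 0)"
    using vsp.linear_independent_extend[OF ind, of "\<lambda>x. if x = Defs.mono [] then 1 else 0"] by metis
  interpret gl: Vector_Spaces.linear fscale "(*)" g by (rule g(1))
  have kill: "g x = 0" if "x \<in> ?I" for x
  proof -
    have "B \<subseteq> {x. g x = 0}" using g(2) B(1) m0 by auto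
    then have "vsp.vs1.span B \<subseteq> {x. g x = 0}"
      by (rule vsp.vs1.span_minimal) (rule gl.subspace_kernel)
    then show ?thesis using that B(3) by auto
  qed
  define \<psi> where "\<psi> t = g (Defs.mono t)" for t
  have gen: "g (sandwich u r w) = 0" if "r \<in> lc_rels V E (K_V c) (K_E c)" "set u \<subseteq> V \<times> K_V c" "set w \<subseteq> V \<times> K_V c" for r u w
    using kill lc_ideal.gen[OF that] by blast
  have "good V E c \<psi>"
    unfolding good_def
  proof (intro conjI allI impI)
    show "\<psi> [] = 1" using g(2) by (simp add: \<psi>_def)
  next
    fix u w v assume a: "set u \<subseteq> V \<times> {..<c}" "set w \<subseteq> V \<times> {..<c}" "v \<in> V"
    have "g (sandwich u (\<lambda>t. (\<Sum>x\<in>K_V c. Defs.mono [(v,x)] t) - Defs.mono [] t) w) = 0"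
      by (rule gen) (use a in \<open>auto intro: lc_rels.sum_one simp: K_V_def\<close>)
    then show "(\<Sum>x<c. \<psi> (u @ (v,x) # w)) = \<psi> (u @ w)"
      by (simp add: sandwich_diff sandwich_sum sandwich_mono gl.diff gl.sum \<psi>_def K_V_def)
  next
    fix u w v x y assume a: "set u \<subseteq> V \<times> {..<c}" "set w \<subseteq> V \<times> {..<c}" "v \<in> V" "x < c" "y < c" "x \<noteq> y"
    have "g (sandwich u (Defs.mono [(v,x),(v,y)]) w) = 0"
      by (rule gen) (use a in \<open>auto intro: lc_rels.orth simp: K_V_def\<close>)
    then show "\<psi> (u @ (v,x) # (v,y) # w) = 0" by (simp add: sandwich_mono \<psi>_def)
  next
    fix u w v v' x assume a: "set u \<subseteq> V \<times> {..<c}" "set w \<subseteq> V \<times> {..<c}" "v \<in> V" "v' \<in> V" "E v v'" "x < c"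
    have "g (sandwich u (Defs.mono [(v,x),(v',x)]) w) = 0"
      by (rule gen) (use a in \<open>auto intro: lc_rels.hom simp: K_V_def K_E_def\<close>)
    then show "\<psi> (u @ (v,x) # (v',x) # w) = 0" by (simp add: sandwich_mono \<psi>_def)
  next
    fix u w v v' x y assume a: "set u \<subseteq> V \<times> {..<c}" "set w \<subseteq> V \<times> {..<c}" "v \<in> V" "v' \<in> V" "E v v'" "x < c" "y < c"
    have "g (sandwich u (\<lambda>t. Defs.mono [(v,x),(v',y)] t - Defs.mono [(v',y),(v,x)] t) w) = 0"
      by (rule gen) (use a in \<open>auto intro: lc_rels.comm simp: K_V_def\<close>)
    then show "\<psi> (u @ (v,x) # (v',y) # w) = \<psi> (u @ (v',y) # (v,x) # w)"
      by (simp add: sandwich_diff sandwich_mono gl.diff \<psi>_def)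
  qed
  then show ?thesis by blast
qed


definition cols :: "nat \<Rightarrow> ('a \<times> nat) list \<Rightarrow> bool" where
  "cols c t \<longleftrightarrow> (\<forall>p\<in>set t. snd p < c)"

lemma cols_simps[simp]: "cols c (u @ w) \<longleftrightarrow> cols c u \<and> cols c w" "cols c (a # w) \<longleftrightarrow> snd a < c \<and> cols c w"
  "cols c []"
  by (auto simp: cols_def)

lemma set_restrict: "set u \<subseteq> V \<times> {..<Suc c} \<Longrightarrow> cols c u \<Longrightarrow> set u \<subseteq> V \<times> {..<c}"
  by (auto simp: cols_def)

lemma good_Suc:
  assumes g: "good V E c \<psi>"
  shows "good V E (Suc c) (\<lambda>t. if cols c t then \<psi> t else 0)"
  unfolding good_def
proof (intro conjI allI impI)
  show "(if cols c [] then \<psi> [] else 0) = 1" using goodD(1)[OF g] by simp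
next
  fix u w v assume a: "set u \<subseteq> V \<times> {..<Suc c}" "set w \<subseteq> V \<times> {..<Suc c}" "v \<in> V"
  show "(\<Sum>x<Suc c. if cols c (u @ (v, x) # w) then \<psi> (u @ (v, x) # w) else 0) =
        (if cols c (u @ w) then \<psi> (u @ w) else 0)"
  proof (cases "cols c u \<and> cols c w")
    case True
    have "(\<Sum>x<Suc c. if cols c (u @ (v, x) # w) then \<psi> (u @ (v, x) # w) else 0) =
       (\<Sum>x<c. \<psi> (u @ (v, x) # w))"
      using True by simp
    also have "\<dots> = \<psi> (u @ w)"
      using True goodD(2)[OF g set_restrict[OF a(1)] set_restrict[OF a(2)] a(3)] by simp
    finally show ?thesis using True by simp
  next
    case False
    then show ?thesis by auto
  qed
next
  fix u w v x y assume a: "set u \<subseteq> V \<times> {..<Suc c}" "set w \<subseteq> V \<times> {..<Suc c}" "v \<in> V" "x < Suc c" "y < Suc c" "x \<noteq> y"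
  show "(if cols c (u @ (v, x) # (v, y) # w) then \<psi> (u @ (v, x) # (v, y) # w) else 0) = 0"
  proof (cases "cols c (u @ (v, x) # (v, y) # w)")
    case True
    then have "cols c u" "cols c w" "x < c" "y < c" by auto
    then show ?thesis using goodD(3)[OF g set_restrict[OF a(1)] set_restrict[OF a(2)] a(3), of x y] a by auto
  next
    case False then show ?thesis by (simp del: cols_simps)
  qed
next
  fix u w v v' x assume a: "set u \<subseteq> V \<times> {..<Suc c}" "set w \<subseteq> V \<times> {..<Suc c}" "v \<in> V" "v' \<in> V" "E v v'" "x < Suc c"
  show "(if cols c (u @ (v, x) # (v', x) # w) then \<psi> (u @ (v, x) # (v', x) # w) else 0) = 0"
  proof (cases "cols c (u @ (v, x) # (v', x) # w)")
    case True
    then have "cols c u" "cols c w" "x < c" by auto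
    then show ?thesis using goodD(4)[OF g set_restrict[OF a(1)] set_restrict[OF a(2)] a(3,4,5)] a by auto
  next
    case False then show ?thesis by (simp del: cols_simps)
  qed
next
  fix u w v v' x y assume a: "set u \<subseteq> V \<times> {..<Suc c}" "set w \<subseteq> V \<times> {..<Suc c}" "v \<in> V" "v' \<in> V" "E v v'" "x < Suc c" "y < Suc c"
  show "(if cols c (u @ (v, x) # (v', y) # w) then \<psi> (u @ (v, x) # (v', y) # w) else 0) =
        (if cols c (u @ (v', y) # (v, x) # w) then \<psi> (u @ (v', y) # (v, x) # w) else 0)"
  proof (cases "cols c (u @ (v, x) # (v', y) # w)")
    case True
    then have "cols c u" "cols c w" "x < c" "y < c" by auto
    then show ?thesis using goodD(5)[OF g set_restrict[OF a(1)] set_restrict[OF a(2)] a(3,4,5), of x y] a by auto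
  next
    case False
    then show ?thesis by auto
  qed
qed

lemma nonzero_mono:
  assumes "lc_nonzero V E (K_V c) (K_E c)" "c \<le> d"
  shows "lc_nonzero V E (K_V d) (K_E d)"
  using assms(2)
proof (induction d rule: dec_induct)
  case base then show ?case using assms(1) .
next
  case (step n)
  obtain \<psi> where "good V E n \<psi>" using nonzero_good[OF step.IH] by blast
  then show ?case using good_Suc good_nonzero by blast
qed

lemma restrict_G:
  assumes g: "good (cart_V VG VH) (cart_E EG EH) c \<psi>" and h0: "h0 \<in> VH"
  shows "good VG EG c (\<lambda>t. \<psi> (map (\<lambda>p. ((fst p, h0), snd p)) t))"
proof -
  let ?f = "\<lambda>p::'a \<times> nat. ((fst p, h0), snd p)"
  have st: "set (map ?f u) \<subseteq> cart_V VG VH \<times> {..<c}" if "set u \<subseteq> VG \<times> {..<c}" for u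
    using that h0 by (auto simp: cart_V_def)
  show ?thesis
    unfolding good_def
  proof (intro conjI allI impI)
    show "\<psi> (map ?f []) = 1" using goodD(1)[OF g] by simp
  next
    fix u w v assume a: "set u \<subseteq> VG \<times> {..<c}" "set w \<subseteq> VG \<times> {..<c}" "v \<in> VG"
    show "(\<Sum>x<c. \<psi> (map ?f (u @ (v, x) # w))) = \<psi> (map ?f (u @ w))"
      using goodD(2)[OF g st[OF a(1)] st[OF a(2)], of "(v,h0)"] a(3) h0 by (simp add: cart_V_def)
  next
    fix u w v x y assume a: "set u \<subseteq> VG \<times> {..<c}" "set w \<subseteq> VG \<times> {..<c}" "v \<in> VG" "x < c" "y < c" "x \<noteq> y"
    show "\<psi> (map ?f (u @ (v, x) # (v, y) # w)) = 0"
      using goodD(3)[OF g st[OF a(1)] st[OF a(2)], of "(v,h0)" x y] a h0 by (simp add: cart_V_def)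
  next
    fix u w v v' x assume a: "set u \<subseteq> VG \<times> {..<c}" "set w \<subseteq> VG \<times> {..<c}" "v \<in> VG" "v' \<in> VG" "EG v v'" "x < c"
    show "\<psi> (map ?f (u @ (v, x) # (v', x) # w)) = 0"
      using goodD(4)[OF g st[OF a(1)] st[OF a(2)], of "(v,h0)" "(v',h0)" x] a h0 by (simp add: cart_V_def cart_E_def)
  next
    fix u w v v' x y assume a: "set u \<subseteq> VG \<times> {..<c}" "set w \<subseteq> VG \<times> {..<c}" "v \<in> VG" "v' \<in> VG" "EG v v'" "x < c" "y < c"
    show "\<psi> (map ?f (u @ (v, x) # (v', y) # w)) = \<psi> (map ?f (u @ (v', y) # (v, x) # w))"
      using goodD(5)[OF g st[OF a(1)] st[OF a(2)], of "(v,h0)" "(v',h0)" x y] a h0 by (simp add: cart_V_def cart_E_def)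
  qed
qed

lemma restrict_H:
  assumes g: "good (cart_V VG VH) (cart_E EG EH) c \<psi>" and g0: "g0 \<in> VG"
  shows "good VH EH c (\<lambda>t. \<psi> (map (\<lambda>p. ((g0, fst p), snd p)) t))"
proof -
  let ?f = "\<lambda>p::'b \<times> nat. ((g0, fst p), snd p)"
  have st: "set (map ?f u) \<subseteq> cart_V VG VH \<times> {..<c}" if "set u \<subseteq> VH \<times> {..<c}" for u
    using that g0 by (auto simp: cart_V_def)
  show ?thesis
    unfolding good_def
  proof (intro conjI allI impI)
    show "\<psi> (map ?f []) = 1" using goodD(1)[OF g] by simp
  next
    fix u w v assume a: "set u \<subseteq> VH \<times> {..<c}" "set w \<subseteq> VH \<times> {..<c}" "v \<in> VH"
    show "(\<Sum>x<c. \<psi> (map ?f (u @ (v, x) # w))) = \<psi> (map ?f (u @ w))"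
      using goodD(2)[OF g st[OF a(1)] st[OF a(2)], of "(g0,v)"] a(3) g0 by (simp add: cart_V_def)
  next
    fix u w v x y assume a: "set u \<subseteq> VH \<times> {..<c}" "set w \<subseteq> VH \<times> {..<c}" "v \<in> VH" "x < c" "y < c" "x \<noteq> y"
    show "\<psi> (map ?f (u @ (v, x) # (v, y) # w)) = 0"
      using goodD(3)[OF g st[OF a(1)] st[OF a(2)], of "(g0,v)" x y] a g0 by (simp add: cart_V_def)
  next
    fix u w v v' x assume a: "set u \<subseteq> VH \<times> {..<c}" "set w \<subseteq> VH \<times> {..<c}" "v \<in> VH" "v' \<in> VH" "EH v v'" "x < c"
    show "\<psi> (map ?f (u @ (v, x) # (v', x) # w)) = 0"
      using goodD(4)[OF g st[OF a(1)] st[OF a(2)], of "(g0,v)" "(g0,v')" x] a g0 by (simp add: cart_V_def cart_E_def)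
  next
    fix u w v v' x y assume a: "set u \<subseteq> VH \<times> {..<c}" "set w \<subseteq> VH \<times> {..<c}" "v \<in> VH" "v' \<in> VH" "EH v v'" "x < c" "y < c"
    show "\<psi> (map ?f (u @ (v, x) # (v', y) # w)) = \<psi> (map ?f (u @ (v', y) # (v, x) # w))"
      using goodD(5)[OF g st[OF a(1)] st[OF a(2)], of "(g0,v)" "(g0,v')" x y] a g0 by (simp add: cart_V_def cart_E_def)
  qed
qed

lemma coloring_nonzero:
  assumes G: "is_graph V E"
  shows "\<exists>c. lc_nonzero V E (K_V c) (K_E c)"
proof -
  have fin: "finite V" using G by (simp add: is_graph_def)
  obtain h where h: "bij_betw h V {0..<card V}" using ex_bij_betw_finite_nat[OF fin] by blast
  have hinj: "h v \<noteq> h v'" if "v \<in> V" "v' \<in> V" "v \<noteq> v'" for v v'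
    using h that by (auto simp: bij_betw_def inj_on_def)
  have hlt: "h v < card V" if "v \<in> V" for v
    using h that by (auto simp: bij_betw_def)
  have irr: "v \<noteq> v'" if "E v v'" for v v' using G that by (auto simp: is_graph_def)
  define ok where "ok t \<longleftrightarrow> (\<forall>p\<in>set t. snd p = h (fst p))" for t :: "('a \<times> nat) list"
  define \<psi> where "\<psi> t = (if ok t then 1 else 0 :: complex)" for t
  have okapp: "ok (u @ w) \<longleftrightarrow> ok u \<and> ok w" "ok (a # w) \<longleftrightarrow> snd a = h (fst a) \<and> ok w" "ok []" for u w a
    by (auto simp: ok_def)
  let ?c = "card V"
  have "good V E ?c \<psi>"
    unfolding good_def
  proof (intro conjI allI impI)
    show "\<psi> [] = 1" by (simp add: \<psi>_def okapp)
  next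
    fix u w v assume a: "set u \<subseteq> V \<times> {..<?c}" "set w \<subseteq> V \<times> {..<?c}" "v \<in> V"
    have "(\<Sum>x<?c. \<psi> (u @ (v, x) # w)) = (\<Sum>x<?c. if x = h v then \<psi> (u @ w) else 0)"
      by (rule sum.cong[OF refl]) (simp add: \<psi>_def okapp)
    also have "\<dots> = \<psi> (u @ w)" using hlt[OF a(3)] by (simp add: sum.delta)
    finally show "(\<Sum>x<?c. \<psi> (u @ (v, x) # w)) = \<psi> (u @ w)" .
  next
    fix u w v x y assume a: "set u \<subseteq> V \<times> {..<?c}" "set w \<subseteq> V \<times> {..<?c}" "v \<in> V" "x < ?c" "y < ?c" "x \<noteq> y"
    then show "\<psi> (u @ (v, x) # (v, y) # w) = 0" by (simp add: \<psi>_def okapp)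
  next
    fix u w v v' x assume a: "set u \<subseteq> V \<times> {..<?c}" "set w \<subseteq> V \<times> {..<?c}" "v \<in> V" "v' \<in> V" "E v v'" "x < ?c"
    have "h v \<noteq> h v'" using hinj[OF a(3,4) irr[OF a(5)]] .
    then show "\<psi> (u @ (v, x) # (v', x) # w) = 0" by (simp add: \<psi>_def okapp)
  next
    fix u w v v' x y assume a: "set u \<subseteq> V \<times> {..<?c}" "set w \<subseteq> V \<times> {..<?c}" "v \<in> V" "v' \<in> V" "E v v'" "x < ?c" "y < ?c"
    show "\<psi> (u @ (v, x) # (v', y) # w) = \<psi> (u @ (v', y) # (v, x) # w)" by (simp add: \<psi>_def okapp conj_ac)
  qed
  then show ?thesis using good_nonzero by blast
qed


definition Yc :: "nat \<Rightarrow> nat \<Rightarrow> nat list set" where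
  "Yc c n = {ys. set ys \<subseteq> {..<c} \<and> length ys = n}"

lemma Yc_finite[simp]: "finite (Yc c n)"
  unfolding Yc_def by (rule finite_lists_length_eq) simp

lemma Yc_0: "Yc c 0 = {[]}" by (auto simp: Yc_def)

lemma Yc_split: "(\<Sum>ys\<in>Yc c (m + n). F ys) = (\<Sum>a\<in>Yc c m. \<Sum>b\<in>Yc c n. F (a @ b))"
proof -
  have img: "Yc c (m + n) = (\<lambda>(a, b). a @ b) ` (Yc c m \<times> Yc c n)"
  proof
    show "Yc c (m + n) \<subseteq> (\<lambda>(a, b). a @ b) ` (Yc c m \<times> Yc c n)"
    proof
      fix ys assume ys: "ys \<in> Yc c (m + n)"
      have "take m ys \<in> Yc c m" "drop m ys \<in> Yc c n"
        using ys by (auto simp: Yc_def dest: in_set_takeD in_set_dropD)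
      moreover have "ys = take m ys @ drop m ys" by simp
      ultimately show "ys \<in> (\<lambda>(a, b). a @ b) ` (Yc c m \<times> Yc c n)"
        by (intro image_eqI[of _ _ "(take m ys, drop m ys)"]) simp_all
    qed
  next
    show "(\<lambda>(a, b). a @ b) ` (Yc c m \<times> Yc c n) \<subseteq> Yc c (m + n)"
      by (auto simp: Yc_def)
  qed
  have inj: "inj_on (\<lambda>(a, b). a @ b) (Yc c m \<times> Yc c n)"
    by (auto simp: inj_on_def Yc_def)
  have "(\<Sum>ys\<in>Yc c (m + n). F ys) = (\<Sum>p\<in>Yc c m \<times> Yc c n. F (fst p @ snd p))"
    unfolding img by (subst sum.reindex[OF inj]) (simp add: case_prod_beta)
  also have "\<dots> = (\<Sum>a\<in>Yc c m. \<Sum>b\<in>Yc c n. F (a @ b))"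
    by (simp add: sum.cartesian_product case_prod_beta)
  finally show ?thesis .
qed

lemma Yc_1: "(\<Sum>ys\<in>Yc c 1. F ys) = (\<Sum>y<c. F [y])"
proof -
  have img: "Yc c 1 = (\<lambda>y. [y]) ` {..<c}"
  proof
    show "Yc c 1 \<subseteq> (\<lambda>y. [y]) ` {..<c}"
    proof
      fix ys assume "ys \<in> Yc c 1"
      then obtain y where "ys = [y]" "y < c" by (auto simp: Yc_def length_Suc_conv)
      then show "ys \<in> (\<lambda>y. [y]) ` {..<c}" by blast
    qed
  qed (auto simp: Yc_def)
  show ?thesis unfolding img by (subst sum.reindex) (auto simp: inj_on_def)
qed

lemma Yc_2: "(\<Sum>ys\<in>Yc c 2. F ys) = (\<Sum>y<c. \<Sum>y'<c. F [y, y'])"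
proof -
  have "(\<Sum>ys\<in>Yc c 2. F ys) = (\<Sum>ys\<in>Yc c (1 + 1). F ys)" by (simp add: numeral_2_eq_2)
  also have "\<dots> = (\<Sum>a\<in>Yc c 1. \<Sum>b\<in>Yc c 1. F (a @ b))" by (rule Yc_split)
  also have "\<dots> = (\<Sum>y<c. \<Sum>b\<in>Yc c 1. F ([y] @ b))" by (rule Yc_1)
  also have "\<dots> = (\<Sum>y<c. \<Sum>y'<c. F ([y] @ [y']))" by (rule sum.cong[OF refl], rule Yc_1)
  finally show ?thesis by simp
qed

definition gp :: "(('a \<times> 'b) \<times> nat) list \<Rightarrow> nat list \<Rightarrow> ('a \<times> nat) list" where
  "gp t ys = map (\<lambda>(p, y). (fst (fst p), y)) (zip t ys)"

definition sb :: "nat \<Rightarrow> nat \<Rightarrow> nat \<Rightarrow> nat" where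
  "sb c x y = (x + (c - y)) mod c"

definition hp :: "nat \<Rightarrow> (('a \<times> 'b) \<times> nat) list \<Rightarrow> nat list \<Rightarrow> ('b \<times> nat) list" where
  "hp c t ys = map (\<lambda>(p, y). (snd (fst p), sb c (snd p) y)) (zip t ys)"

definition prodpsi :: "nat \<Rightarrow> (('a \<times> nat) list \<Rightarrow> complex) \<Rightarrow> (('b \<times> nat) list \<Rightarrow> complex)
    \<Rightarrow> (('a \<times> 'b) \<times> nat) list \<Rightarrow> complex" where
  "prodpsi c \<psi>G \<psi>H t = (\<Sum>ys\<in>Yc c (length t). \<psi>G (gp t ys) * \<psi>H (hp c t ys))"

lemma gp_app: "length u = length a \<Longrightarrow> gp (u @ t) (a @ b) = gp u a @ gp t b"
  by (simp add: gp_def)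
lemma hp_app: "length u = length a \<Longrightarrow> hp c (u @ t) (a @ b) = hp c u a @ hp c t b"
  by (simp add: hp_def)
lemma gp_simps[simp]: "gp [] [] = []" "gp (p # t) (y # ys) = (fst (fst p), y) # gp t ys"
  by (simp_all add: gp_def)
lemma hp_simps[simp]: "hp c [] [] = []" "hp c (p # t) (y # ys) = (snd (fst p), sb c (snd p) y) # hp c t ys"
  by (simp_all add: hp_def)

lemma decomp:
  "prodpsi c \<psi>G \<psi>H (u @ m @ w) =
    (\<Sum>a\<in>Yc c (length u). \<Sum>d\<in>Yc c (length w). \<Sum>b\<in>Yc c (length m).
       \<psi>G (gp u a @ gp m b @ gp w d) * \<psi>H (hp c u a @ hp c m b @ hp c w d))"
proof -
  have "prodpsi c \<psi>G \<psi>H (u @ m @ w) =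
     (\<Sum>a\<in>Yc c (length u). \<Sum>b\<in>Yc c (length m). \<Sum>d\<in>Yc c (length w).
        \<psi>G (gp (u @ m @ w) (a @ b @ d)) * \<psi>H (hp c (u @ m @ w) (a @ b @ d)))"
    unfolding prodpsi_def by (simp add: Yc_split)
  also have "\<dots> = (\<Sum>a\<in>Yc c (length u). \<Sum>b\<in>Yc c (length m). \<Sum>d\<in>Yc c (length w).
       \<psi>G (gp u a @ gp m b @ gp w d) * \<psi>H (hp c u a @ hp c m b @ hp c w d))"
    apply (rule sum.cong[OF refl])+
    apply (simp add: Yc_def gp_app hp_app)
    done
  also have "\<dots> = (\<Sum>a\<in>Yc c (length u). \<Sum>d\<in>Yc c (length w). \<Sum>b\<in>Yc c (length m).
       \<psi>G (gp u a @ gp m b @ gp w d) * \<psi>H (hp c u a @ hp c m b @ hp c w d))"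
    by (rule sum.cong[OF refl], rule sum.swap)
  finally show ?thesis .
qed


lemma sb_inv: "x < (c::nat) \<Longrightarrow> y \<le> c \<Longrightarrow> (sb c x y + y) mod c = x"
  unfolding sb_def
  by (metis mod_add_left_eq mod_less add.commute mod_add_self1 group_cancel.add2 ordered_cancel_comm_monoid_diff_class.le_imp_diff_is_add)

lemma l3: "y < (c::nat) \<Longrightarrow> ((s + y) mod c + (c - s mod c)) mod c = y"
proof -
  assume y: "y < c"
  have m: "s mod c < c" using y by simp
  have "((s + y) mod c + (c - s mod c)) mod c = (s + y + (c - s mod c)) mod c" by (simp add: mod_add_left_eq)
  also have "s + y + (c - s mod c) = y + c + (s div c) * c"
    using m div_mult_mod_eq[of s c] by linarith
  also have "(y + c + (s div c) * c) mod c = y" using y by simp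
  finally show ?thesis .
qed

lemma sb_lt: "0 < c \<Longrightarrow> sb c x y < c" by (simp add: sb_def)

lemma sb_inj1: "x < c \<Longrightarrow> x' < c \<Longrightarrow> y \<le> c \<Longrightarrow> sb c x y = sb c x' y \<Longrightarrow> x = x'"
  by (metis sb_inv)

lemma sb_inj2: "x < c \<Longrightarrow> y < c \<Longrightarrow> y' < c \<Longrightarrow> sb c x y = sb c x y' \<Longrightarrow> y = y'"
proof -
  assume a: "x < c" "y < c" "y' < c" "sb c x y = sb c x y'"
  have "(sb c x y + y) mod c = (sb c x y + y') mod c"
    using sb_inv[of x c y] sb_inv[of x c y'] a by simp
  then show "y = y'" using l3[of y c "sb c x y"] l3[of y' c "sb c x y"] a(2,3) by metis
qed

lemma sb_sum: "y < c \<Longrightarrow> (\<Sum>x<c. f (sb c x y)) = (\<Sum>z<c. f z)"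
proof (rule sum.reindex_bij_witness[where j="\<lambda>x. sb c x y" and i="\<lambda>z. (z + y) mod c"])
  fix a assume "y < c" "a \<in> {..<c}"
  then show "(sb c a y + y) mod c = a" using sb_inv by simp
next
  fix a assume "y < c" "a \<in> {..<c}"
  then show "sb c a y \<in> {..<c}" using sb_lt by simp
next
  fix b assume y: "y < c" and b: "b \<in> {..<c}"
  have "((b + (c - (c - y))) mod c + (c - y)) mod c = b"
    using sb_inv[of b c "c - y", unfolded sb_def] b by simp
  then show "sb c ((b + y) mod c) y = b" using y by (simp add: sb_def)
next
  fix b assume "y < c" "b \<in> {..<c}"
  then show "(b + y) mod c \<in> {..<c}" by simp
qed simp

lemma good_comm':
  assumes g: "good V E c \<psi>" "set u \<subseteq> V \<times> {..<c}" "set w \<subseteq> V \<times> {..<c}" "v \<in> V" "v' \<in> V"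
    "v = v' \<or> E v v'" "x < c" "y < c"
  shows "\<psi> (u @ (v,x) # (v',y) # w) = \<psi> (u @ (v',y) # (v,x) # w)"
proof (cases "E v v'")
  case True show ?thesis using goodD(5)[OF g(1-5) True g(7,8)] .
next
  case False
  then have vv: "v' = v" using g(6) by simp
  show ?thesis
  proof (cases "x = y")
    case False
    have "\<psi> (u @ (v,x) # (v,y) # w) = 0" using goodD(3)[OF g(1-4) g(7,8) False] .
    moreover have "\<psi> (u @ (v,y) # (v,x) # w) = 0" using goodD(3)[OF g(1-4) g(8,7)] False by simp
    ultimately show ?thesis using vv by simp
  qed (simp add: vv)
qed

locale two_good =
  fixes VG :: "'a set" and EG and VH :: "'b set" and EH and c :: nat and \<psi>G and \<psi>H
  assumes gG: "good VG EG c \<psi>G" and gH: "good VH EH c \<psi>H" and cpos: "0 < c"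
begin

lemma inner_S:
  assumes "set A \<subseteq> VG \<times> {..<c}" "set D \<subseteq> VG \<times> {..<c}" "set A' \<subseteq> VH \<times> {..<c}" "set D' \<subseteq> VH \<times> {..<c}"
    "g \<in> VG" "h \<in> VH"
  shows "(\<Sum>x<c. \<Sum>y<c. \<psi>G (A @ (g,y) # D) * \<psi>H (A' @ (h, sb c x y) # D')) = \<psi>G (A @ D) * \<psi>H (A' @ D')"
proof -
  have "(\<Sum>x<c. \<Sum>y<c. \<psi>G (A @ (g,y) # D) * \<psi>H (A' @ (h, sb c x y) # D')) =
        (\<Sum>y<c. \<psi>G (A @ (g,y) # D) * (\<Sum>x<c. \<psi>H (A' @ (h, sb c x y) # D')))"
    by (subst sum.swap) (simp add: sum_distrib_left)
  also have "\<dots> = (\<Sum>y<c. \<psi>G (A @ (g,y) # D) * \<psi>H (A' @ D'))"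
  proof (rule sum.cong[OF refl])
    fix y assume "y \<in> {..<c}"
    then have "(\<Sum>x<c. \<psi>H (A' @ (h, sb c x y) # D')) = (\<Sum>z<c. \<psi>H (A' @ (h, z) # D'))"
      by (intro sb_sum) simp
    also have "\<dots> = \<psi>H (A' @ D')" using goodD(2)[OF gH assms(3,4,6)] .
    finally show "\<psi>G (A @ (g,y) # D) * (\<Sum>x<c. \<psi>H (A' @ (h, sb c x y) # D')) = \<psi>G (A @ (g,y) # D) * \<psi>H (A' @ D')"
      by simp
  qed
  also have "\<dots> = \<psi>G (A @ D) * \<psi>H (A' @ D')"
    using goodD(2)[OF gG assms(1,2,5)] by (simp add: sum_distrib_right[symmetric])
  finally show ?thesis .
qed

lemma inner_O:
  assumes "set A \<subseteq> VG \<times> {..<c}" "set D \<subseteq> VG \<times> {..<c}" "set A' \<subseteq> VH \<times> {..<c}" "set D' \<subseteq> VH \<times> {..<c}"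
    "g \<in> VG" "h \<in> VH" "x < c" "x' < c" "x \<noteq> x'"
  shows "(\<Sum>y<c. \<Sum>y'<c. \<psi>G (A @ (g,y) # (g,y') # D) * \<psi>H (A' @ (h, sb c x y) # (h, sb c x' y') # D')) = 0"
proof (intro sum.neutral ballI)
  fix y y' assume y: "y \<in> {..<c}" and y': "y' \<in> {..<c}"
  show "\<psi>G (A @ (g,y) # (g,y') # D) * \<psi>H (A' @ (h, sb c x y) # (h, sb c x' y') # D') = 0"
  proof (cases "y = y'")
    case True
    then have "sb c x y \<noteq> sb c x' y'" using sb_inj1[of x c x' y] assms(7-9) y by auto
    then have "\<psi>H (A' @ (h, sb c x y) # (h, sb c x' y') # D') = 0"
      using goodD(3)[OF gH assms(3,4,6)] sb_lt[OF cpos] by blast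
    then show ?thesis by simp
  next
    case False
    then have "\<psi>G (A @ (g,y) # (g,y') # D) = 0"
      using goodD(3)[OF gG assms(1,2,5)] y y' by blast
    then show ?thesis by simp
  qed
qed

lemma inner_Hm:
  assumes "set A \<subseteq> VG \<times> {..<c}" "set D \<subseteq> VG \<times> {..<c}" "set A' \<subseteq> VH \<times> {..<c}" "set D' \<subseteq> VH \<times> {..<c}"
    "g \<in> VG" "h \<in> VH" "g' \<in> VG" "h' \<in> VH" "(g = g' \<and> EH h h') \<or> (EG g g' \<and> h = h')" "x < c"
  shows "(\<Sum>y<c. \<Sum>y'<c. \<psi>G (A @ (g,y) # (g',y') # D) * \<psi>H (A' @ (h, sb c x y) # (h', sb c x y') # D')) = 0"
proof (intro sum.neutral ballI)
  fix y y' assume y: "y \<in> {..<c}" and y': "y' \<in> {..<c}"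
  show "\<psi>G (A @ (g,y) # (g',y') # D) * \<psi>H (A' @ (h, sb c x y) # (h', sb c x y') # D') = 0"
  proof (cases "g = g' \<and> EH h h'")
    case True
    show ?thesis
    proof (cases "y = y'")
      case True
      have "\<psi>H (A' @ (h, sb c x y) # (h', sb c x y) # D') = 0"
        using goodD(4)[OF gH assms(3,4,6,8)] \<open>g = g' \<and> EH h h'\<close> sb_lt[OF cpos] by blast
      then show ?thesis using True by simp
    next
      case False
      have "\<psi>G (A @ (g,y) # (g,y') # D) = 0"
        using goodD(3)[OF gG assms(1,2,5)] y y' False by blast
      then show ?thesis using True by simp
    qed
  next
    case False
    then have gg: "EG g g'" "h = h'" using assms(9) by auto
    show ?thesis
    proof (cases "y = y'")
      case True
      have "\<psi>G (A @ (g,y) # (g',y) # D) = 0"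
        using goodD(4)[OF gG assms(1,2,5,7) gg(1)] y by blast
      then show ?thesis using True by simp
    next
      case False
      then have "sb c x y \<noteq> sb c x y'" using sb_inj2[of x c y y'] assms(10) y y' by auto
      then have "\<psi>H (A' @ (h, sb c x y) # (h, sb c x y') # D') = 0"
        using goodD(3)[OF gH assms(3,4,6)] sb_lt[OF cpos] by blast
      then show ?thesis using gg by simp
    qed
  qed
qed

lemma inner_C:
  assumes "set A \<subseteq> VG \<times> {..<c}" "set D \<subseteq> VG \<times> {..<c}" "set A' \<subseteq> VH \<times> {..<c}" "set D' \<subseteq> VH \<times> {..<c}"
    "g \<in> VG" "h \<in> VH" "g' \<in> VG" "h' \<in> VH" "(g = g' \<and> EH h h') \<or> (EG g g' \<and> h = h')" "x < c" "x' < c"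
  shows "(\<Sum>y<c. \<Sum>y'<c. \<psi>G (A @ (g,y) # (g',y') # D) * \<psi>H (A' @ (h, sb c x y) # (h', sb c x' y') # D')) =
         (\<Sum>y<c. \<Sum>y'<c. \<psi>G (A @ (g',y) # (g,y') # D) * \<psi>H (A' @ (h', sb c x' y) # (h, sb c x y') # D'))"
proof -
  have cg: "g = g' \<or> EG g g'" and ch: "h = h' \<or> EH h h'" using assms(9) by auto
  have "(\<Sum>y<c. \<Sum>y'<c. \<psi>G (A @ (g',y) # (g,y') # D) * \<psi>H (A' @ (h', sb c x' y) # (h, sb c x y') # D')) =
        (\<Sum>y<c. \<Sum>y'<c. \<psi>G (A @ (g',y') # (g,y) # D) * \<psi>H (A' @ (h', sb c x' y') # (h, sb c x y) # D'))"
    by (rule sum.swap)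
  also have "\<dots> = (\<Sum>y<c. \<Sum>y'<c. \<psi>G (A @ (g,y) # (g',y') # D) * \<psi>H (A' @ (h, sb c x y) # (h', sb c x' y') # D'))"
  proof (intro sum.cong refl)
    fix y y' assume y: "y \<in> {..<c}" and y': "y' \<in> {..<c}"
    have "\<psi>G (A @ (g,y) # (g',y') # D) = \<psi>G (A @ (g',y') # (g,y) # D)"
      using good_comm'[OF gG assms(1,2,5,7) cg] y y' by simp
    moreover have "\<psi>H (A' @ (h, sb c x y) # (h', sb c x' y') # D') = \<psi>H (A' @ (h', sb c x' y') # (h, sb c x y) # D')"
      using good_comm'[OF gH assms(3,4,6,8) ch sb_lt[OF cpos] sb_lt[OF cpos]] .
    ultimately show "\<psi>G (A @ (g',y') # (g,y) # D) * \<psi>H (A' @ (h', sb c x' y') # (h, sb c x y) # D') =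
        \<psi>G (A @ (g,y) # (g',y') # D) * \<psi>H (A' @ (h, sb c x y) # (h', sb c x' y') # D')" by simp
  qed
  finally show ?thesis by simp
qed

end


lemma Yc_1': "(\<Sum>ys\<in>Yc c (Suc 0). F ys) = (\<Sum>y<c. F [y])"
  using Yc_1[where c=c and F=F] by simp
lemma Yc_2': "(\<Sum>ys\<in>Yc c (Suc (Suc 0)). F ys) = (\<Sum>y<c. \<Sum>y'<c. F [y, y'])"
  using Yc_2[where c=c and F=F] by (simp add: numeral_2_eq_2)

context two_good
begin

lemma ctx:
  assumes "set u \<subseteq> cart_V VG VH \<times> {..<c}" "a \<in> Yc c (length u)"
  shows "set (gp u a) \<subseteq> VG \<times> {..<c}" "set (hp c u a) \<subseteq> VH \<times> {..<c}"
proof -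
  have z: "p \<in> set u \<and> y \<in> set a" if "(p, y) \<in> set (zip u a)" for p y
    using that by (blast dest: set_zip_leftD set_zip_rightD)
  have ya: "y < c" if "y \<in> set a" for y using assms(2) that by (auto simp: Yc_def)
  show "set (gp u a) \<subseteq> VG \<times> {..<c}"
  proof
    fix q assume "q \<in> set (gp u a)"
    then obtain p y where py: "(p, y) \<in> set (zip u a)" "q = (fst (fst p), y)" by (auto simp: gp_def)
    then show "q \<in> VG \<times> {..<c}" using z[OF py(1)] ya assms(1) by (auto simp: cart_V_def)
  qed
  show "set (hp c u a) \<subseteq> VH \<times> {..<c}"
  proof
    fix q assume "q \<in> set (hp c u a)"
    then obtain p y where py: "(p, y) \<in> set (zip u a)" "q = (snd (fst p), sb c (snd p) y)" by (auto simp: hp_def)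
    then show "q \<in> VH \<times> {..<c}" using z[OF py(1)] assms(1) sb_lt[OF cpos] by (auto simp: cart_V_def)
  qed
qed

lemma swap3: "(\<Sum>x\<in>X. \<Sum>a\<in>Aa. \<Sum>d\<in>Dd. f x a d) = (\<Sum>a\<in>Aa. \<Sum>d\<in>Dd. \<Sum>x\<in>X. f x a d)"
  by (subst sum.swap) (rule sum.cong[OF refl], rule sum.swap)

lemma prod_good: "good (cart_V VG VH) (cart_E EG EH) c (prodpsi c \<psi>G \<psi>H)"
  unfolding good_def
proof (intro conjI allI impI)
  show "prodpsi c \<psi>G \<psi>H [] = 1"
    using goodD(1)[OF gG] goodD(1)[OF gH] by (simp add: prodpsi_def Yc_0)
next
  fix u w v assume a: "set u \<subseteq> cart_V VG VH \<times> {..<c}" "set w \<subseteq> cart_V VG VH \<times> {..<c}" "v \<in> cart_V VG VH"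
  obtain g h where v: "v = (g, h)" "g \<in> VG" "h \<in> VH" using a(3) by (auto simp: cart_V_def)
  have e1: "prodpsi c \<psi>G \<psi>H (u @ (v, x) # w) = (\<Sum>a\<in>Yc c (length u). \<Sum>d\<in>Yc c (length w). \<Sum>y<c.
      \<psi>G (gp u a @ (g, y) # gp w d) * \<psi>H (hp c u a @ (h, sb c x y) # hp c w d))" for x
    using decomp[of c \<psi>G \<psi>H u "[(v, x)]" w] v(1) by (simp add: Yc_1')
  have e0: "prodpsi c \<psi>G \<psi>H (u @ w) = (\<Sum>a\<in>Yc c (length u). \<Sum>d\<in>Yc c (length w).
      \<psi>G (gp u a @ gp w d) * \<psi>H (hp c u a @ hp c w d))"
    using decomp[of c \<psi>G \<psi>H u "[]" w] by (simp add: Yc_0)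
  have "(\<Sum>x<c. prodpsi c \<psi>G \<psi>H (u @ (v, x) # w)) = (\<Sum>a\<in>Yc c (length u). \<Sum>d\<in>Yc c (length w). \<Sum>x<c. \<Sum>y<c.
      \<psi>G (gp u a @ (g, y) # gp w d) * \<psi>H (hp c u a @ (h, sb c x y) # hp c w d))"
    unfolding e1 by (rule swap3)
  also have "\<dots> = (\<Sum>a\<in>Yc c (length u). \<Sum>d\<in>Yc c (length w).
      \<psi>G (gp u a @ gp w d) * \<psi>H (hp c u a @ hp c w d))"
  proof (rule sum.cong[OF refl], rule sum.cong[OF refl])
    fix aa d assume aa: "aa \<in> Yc c (length u)" and d: "d \<in> Yc c (length w)"
    show "(\<Sum>x<c. \<Sum>y<c. \<psi>G (gp u aa @ (g, y) # gp w d) * \<psi>H (hp c u aa @ (h, sb c x y) # hp c w d)) =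
        \<psi>G (gp u aa @ gp w d) * \<psi>H (hp c u aa @ hp c w d)"
      by (rule inner_S[OF ctx(1)[OF a(1) aa] ctx(1)[OF a(2) d] ctx(2)[OF a(1) aa] ctx(2)[OF a(2) d] v(2,3)])
  qed
  finally show "(\<Sum>x<c. prodpsi c \<psi>G \<psi>H (u @ (v, x) # w)) = prodpsi c \<psi>G \<psi>H (u @ w)"
    using e0 by simp
next
  fix u w v x y assume a: "set u \<subseteq> cart_V VG VH \<times> {..<c}" "set w \<subseteq> cart_V VG VH \<times> {..<c}" "v \<in> cart_V VG VH"
    "x < c" "y < c" "x \<noteq> y"
  obtain g h where v: "v = (g, h)" "g \<in> VG" "h \<in> VH" using a(3) by (auto simp: cart_V_def)
  have "prodpsi c \<psi>G \<psi>H (u @ (v, x) # (v, y) # w) = (\<Sum>a\<in>Yc c (length u). \<Sum>d\<in>Yc c (length w). \<Sum>y1<c. \<Sum>y2<c.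
      \<psi>G (gp u a @ (g, y1) # (g, y2) # gp w d) * \<psi>H (hp c u a @ (h, sb c x y1) # (h, sb c y y2) # hp c w d))"
    using decomp[of c \<psi>G \<psi>H u "[(v, x), (v, y)]" w] v(1) by (simp add: Yc_2')
  also have "\<dots> = 0"
  proof (rule sum.neutral, rule ballI, rule sum.neutral, rule ballI)
    fix aa d assume aa: "aa \<in> Yc c (length u)" and d: "d \<in> Yc c (length w)"
    show "(\<Sum>y1<c. \<Sum>y2<c. \<psi>G (gp u aa @ (g, y1) # (g, y2) # gp w d) * \<psi>H (hp c u aa @ (h, sb c x y1) # (h, sb c y y2) # hp c w d)) = 0"
      by (rule inner_O[OF ctx(1)[OF a(1) aa] ctx(1)[OF a(2) d] ctx(2)[OF a(1) aa] ctx(2)[OF a(2) d] v(2,3) a(4-6)])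
  qed
  finally show "prodpsi c \<psi>G \<psi>H (u @ (v, x) # (v, y) # w) = 0" .
next
  fix u w v v' x assume a: "set u \<subseteq> cart_V VG VH \<times> {..<c}" "set w \<subseteq> cart_V VG VH \<times> {..<c}" "v \<in> cart_V VG VH"
    "v' \<in> cart_V VG VH" "cart_E EG EH v v'" "x < c"
  obtain g h where v: "v = (g, h)" "g \<in> VG" "h \<in> VH" using a(3) by (auto simp: cart_V_def)
  obtain g' h' where v': "v' = (g', h')" "g' \<in> VG" "h' \<in> VH" using a(4) by (auto simp: cart_V_def)
  have adj: "(g = g' \<and> EH h h') \<or> (EG g g' \<and> h = h')" using a(5) v(1) v'(1) by (simp add: cart_E_def)
  have "prodpsi c \<psi>G \<psi>H (u @ (v, x) # (v', x) # w) = (\<Sum>a\<in>Yc c (length u). \<Sum>d\<in>Yc c (length w). \<Sum>y1<c. \<Sum>y2<c.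
      \<psi>G (gp u a @ (g, y1) # (g', y2) # gp w d) * \<psi>H (hp c u a @ (h, sb c x y1) # (h', sb c x y2) # hp c w d))"
    using decomp[of c \<psi>G \<psi>H u "[(v, x), (v', x)]" w] v(1) v'(1) by (simp add: Yc_2')
  also have "\<dots> = 0"
  proof (rule sum.neutral, rule ballI, rule sum.neutral, rule ballI)
    fix aa d assume aa: "aa \<in> Yc c (length u)" and d: "d \<in> Yc c (length w)"
    show "(\<Sum>y1<c. \<Sum>y2<c. \<psi>G (gp u aa @ (g, y1) # (g', y2) # gp w d) * \<psi>H (hp c u aa @ (h, sb c x y1) # (h', sb c x y2) # hp c w d)) = 0"
      by (rule inner_Hm[OF ctx(1)[OF a(1) aa] ctx(1)[OF a(2) d] ctx(2)[OF a(1) aa] ctx(2)[OF a(2) d] v(2,3) v'(2,3) adj a(6)])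
  qed
  finally show "prodpsi c \<psi>G \<psi>H (u @ (v, x) # (v', x) # w) = 0" .
next
  fix u w v v' x y assume a: "set u \<subseteq> cart_V VG VH \<times> {..<c}" "set w \<subseteq> cart_V VG VH \<times> {..<c}" "v \<in> cart_V VG VH"
    "v' \<in> cart_V VG VH" "cart_E EG EH v v'" "x < c" "y < c"
  obtain g h where v: "v = (g, h)" "g \<in> VG" "h \<in> VH" using a(3) by (auto simp: cart_V_def)
  obtain g' h' where v': "v' = (g', h')" "g' \<in> VG" "h' \<in> VH" using a(4) by (auto simp: cart_V_def)
  have adj: "(g = g' \<and> EH h h') \<or> (EG g g' \<and> h = h')" using a(5) v(1) v'(1) by (simp add: cart_E_def)
  have "prodpsi c \<psi>G \<psi>H (u @ (v, x) # (v', y) # w) = (\<Sum>a\<in>Yc c (length u). \<Sum>d\<in>Yc c (length w). \<Sum>y1<c. \<Sum>y2<c.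
      \<psi>G (gp u a @ (g, y1) # (g', y2) # gp w d) * \<psi>H (hp c u a @ (h, sb c x y1) # (h', sb c y y2) # hp c w d))"
    using decomp[of c \<psi>G \<psi>H u "[(v, x), (v', y)]" w] v(1) v'(1) by (simp add: Yc_2')
  also have "\<dots> = (\<Sum>a\<in>Yc c (length u). \<Sum>d\<in>Yc c (length w). \<Sum>y1<c. \<Sum>y2<c.
      \<psi>G (gp u a @ (g', y1) # (g, y2) # gp w d) * \<psi>H (hp c u a @ (h', sb c y y1) # (h, sb c x y2) # hp c w d))"
  proof (rule sum.cong[OF refl], rule sum.cong[OF refl])
    fix aa d assume aa: "aa \<in> Yc c (length u)" and d: "d \<in> Yc c (length w)"
    show "(\<Sum>y1<c. \<Sum>y2<c. \<psi>G (gp u aa @ (g, y1) # (g', y2) # gp w d) * \<psi>H (hp c u aa @ (h, sb c x y1) # (h', sb c y y2) # hp c w d)) =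
       (\<Sum>y1<c. \<Sum>y2<c. \<psi>G (gp u aa @ (g', y1) # (g, y2) # gp w d) * \<psi>H (hp c u aa @ (h', sb c y y1) # (h, sb c x y2) # hp c w d))"
      by (rule inner_C[OF ctx(1)[OF a(1) aa] ctx(1)[OF a(2) d] ctx(2)[OF a(1) aa] ctx(2)[OF a(2) d] v(2,3) v'(2,3) adj a(6,7)])
  qed
  also have "\<dots> = prodpsi c \<psi>G \<psi>H (u @ (v', y) # (v, x) # w)"
    using decomp[of c \<psi>G \<psi>H u "[(v', y), (v, x)]" w] v(1) v'(1) by (simp add: Yc_2')
  finally show "prodpsi c \<psi>G \<psi>H (u @ (v, x) # (v', y) # w) = prodpsi c \<psi>G \<psi>H (u @ (v', y) # (v, x) # w)" .
qed

end


theorem mainTheorem7: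
  fixes VG :: "'a set" and EG :: "'a \<Rightarrow> 'a \<Rightarrow> bool"
    and VH :: "'b set" and EH :: "'b \<Rightarrow> 'b \<Rightarrow> bool"
  assumes "is_graph VG EG" and "is_graph VH EH"
    and "VG \<noteq> {}" and "VH \<noteq> {}"
  shows "chi_lc (cart_V VG VH) (cart_E EG EH) = max (chi_lc VG EG) (chi_lc VH EH)"
proof -
  obtain g0 where g0: "g0 \<in> VG" using assms(3) by blast
  obtain h0 where h0: "h0 \<in> VH" using assms(4) by blast
  have nzG: "lc_nonzero VG EG (K_V (chi_lc VG EG)) (K_E (chi_lc VG EG))"
    unfolding chi_lc_def by (rule LeastI_ex[OF coloring_nonzero[OF assms(1)]])
  have nzH: "lc_nonzero VH EH (K_V (chi_lc VH EH)) (K_E (chi_lc VH EH))"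
    unfolding chi_lc_def by (rule LeastI_ex[OF coloring_nonzero[OF assms(2)]])
  define m where "m = max (chi_lc VG EG) (chi_lc VH EH)"
  have "lc_nonzero VG EG (K_V m) (K_E m)" by (rule nonzero_mono[OF nzG]) (simp add: m_def)
  then obtain \<psi>G where gG: "good VG EG m \<psi>G" using nonzero_good by blast
  have "lc_nonzero VH EH (K_V m) (K_E m)" by (rule nonzero_mono[OF nzH]) (simp add: m_def)
  then obtain \<psi>H where gH: "good VH EH m \<psi>H" using nonzero_good by blast
  have mpos: "0 < m"
  proof (rule ccontr)
    assume "\<not> 0 < m"
    then have "m = 0" by simp
    then show False using goodD(2)[OF gG, of "[]" "[]" g0] goodD(1)[OF gG] g0 by simp
  qed
  interpret tg: two_good VG EG VH EH m \<psi>G \<psi>H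
    by unfold_locales (rule gG, rule gH, rule mpos)
  have nzP: "lc_nonzero (cart_V VG VH) (cart_E EG EH) (K_V m) (K_E m)"
    by (rule good_nonzero[OF tg.prod_good])
  have lower: "m \<le> c" if nzc: "lc_nonzero (cart_V VG VH) (cart_E EG EH) (K_V c) (K_E c)" for c
  proof -
    obtain \<psi> where g: "good (cart_V VG VH) (cart_E EG EH) c \<psi>" using nonzero_good[OF nzc] by blast
    have "lc_nonzero VG EG (K_V c) (K_E c)" by (rule good_nonzero[OF restrict_G[OF g h0]])
    then have "chi_lc VG EG \<le> c" unfolding chi_lc_def by (rule Least_le)
    moreover have "lc_nonzero VH EH (K_V c) (K_E c)" by (rule good_nonzero[OF restrict_H[OF g g0]])
    then have "chi_lc VH EH \<le> c" unfolding chi_lc_def by (rule Least_le)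
    ultimately show ?thesis by (simp add: m_def)
  qed
  have "chi_lc (cart_V VG VH) (cart_E EG EH) = m"
    unfolding chi_lc_def by (rule Least_equality[where P="\<lambda>c. lc_nonzero (cart_V VG VH) (cart_E EG EH) (K_V c) (K_E c)", OF nzP lower])
  then show ?thesis by (simp add: m_def)
qed

end
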